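(* Let $n\ge1$. A temporal theory $\Gamma$ is $\mathrm{ITL}^{\mathrm{BD}_n}$-consistent if and only if $\Gamma$ is $\mathrm{LTL}$-consistent.
   Context: Fix a countable set $\mathbb{P}$ of atoms. Temporal formulas: $\varphi ::= p\mid\bot\mid\varphi\wedge\varphi\mid\varphi\vee\varphi\mid\varphi\to\varphi\mid\circ\varphi\mid\varphi\,\mathsf{U}\,\varphi\mid\varphi\,\mathsf{R}\,\varphi$. An intuitionistic temporal frame is $(W,\preccurlyeq,S)$ with $W\ne\emptyset$, $\preccurlyeq$ a partial order, $S:W\to W$ forward confluent ($w\preccurlyeq v\Rightarrow S(w)\preccurlyeq S(v)$); persistent if also backward confluent (if $S(w)=v\preccurlyeq u$ then some $t\succcurlyeq w$ has $S(t)=u$). A model adds $V:W\to2^{\mathbb{P}}$ monotone along $\preccurlyeq$. Satisfaction: atoms via $V$; $\bot$ never; $\wedge,\vee$ pointwise; $M,w\models\varphi\to\psi$ iff for all $v\succcurlyeq w$, $M,v\models\varphi$ implies $M,v\models\psi$; $\circ\varphi$ at $w$ iff $\varphi$ at $S(w)$; $\varphi\,\mathsf{U}\,\psi$: some $k\ge0$ with $\psi$ at $S^k(w)$ and $\varphi$ at $S^i(w)$ for all $0\le i<k$; $\varphi\,\mathsf{R}\,\psi$: for all $k\ge0$, $\psi$ at $S^k(w)$ or $\varphi$ at some $S^i(w)$, $0\le i<k$. Depth $\le n$: no chain of $n+1$ pairwise distinct $\preccurlyeq$-related worlds. $\mathrm{ITL}^{\mathrm{BD}_n}$-models are models on persistent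 frames of depth $\le n$; $\mathrm{LTL}$-models are $\mathrm{ITL}^{\mathrm{BD}_1}$-models (i.e. $\preccurlyeq$ is the identity). $\Gamma$ is $\mathsf{L}$-consistent if there exist an $\mathsf{L}$-model $M$ and a world $w$ with $M,w\models\gamma$ for all $\gamma\in\Gamma$. *)

theory Defs
  imports Main "HOL-Library.Countable"
begin

datatype 'p fm =
    Atom 'p
  | Bot
  | And "'p fm" "'p fm"
  | Or "'p fm" "'p fm"
  | Imp "'p fm" "'p fm"
  | Next "'p fm"
  | Until "'p fm" "'p fm"
  | Release "'p fm" "'p fm"

definition itl_frame :: "'w set \<Rightarrow> 'w rel \<Rightarrow> ('w \<Rightarrow> 'w) \<Rightarrow> bool" where
  "itl_frame W R S \<longleftrightarrow>
     W \<noteq> {} \<and> partial_order_on W R \<and> (\<forall>w\<in>W. S w \<in> W) \<and>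
     (\<forall>w v. (w, v) \<in> R \<longrightarrow> (S w, S v) \<in> R)"

definition backward_confluent :: "'w set \<Rightarrow> 'w rel \<Rightarrow> ('w \<Rightarrow> 'w) \<Rightarrow> bool" where
  "backward_confluent W R S \<longleftrightarrow>
     (\<forall>w\<in>W. \<forall>u. (S w, u) \<in> R \<longrightarrow> (\<exists>t. (w, t) \<in> R \<and> S t = u))"

definition persistent_frame :: "'w set \<Rightarrow> 'w rel \<Rightarrow> ('w \<Rightarrow> 'w) \<Rightarrow> bool" where
  "persistent_frame W R S \<longleftrightarrow> itl_frame W R S \<and> backward_confluent W R S"

definition depth_le :: "nat \<Rightarrow> 'w set \<Rightarrow> 'w rel \<Rightarrow> bool" where
  "depth_le n W R \<longleftrightarrow>
     \<not> (\<exists>C. C \<subseteq> W \<and> card C = n + 1 \<and>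
            (\<forall>x\<in>C. \<forall>y\<in>C. (x, y) \<in> R \<or> (y, x) \<in> R))"

definition monotone_val :: "'w set \<Rightarrow> 'w rel \<Rightarrow> ('w \<Rightarrow> 'p set) \<Rightarrow> bool" where
  "monotone_val W R V \<longleftrightarrow> (\<forall>w v. (w, v) \<in> R \<longrightarrow> V w \<subseteq> V v)"

primrec sat :: "'w rel \<Rightarrow> ('w \<Rightarrow> 'w) \<Rightarrow> ('w \<Rightarrow> 'p set) \<Rightarrow> 'w \<Rightarrow> 'p fm \<Rightarrow> bool" where
  "sat R S V w (Atom p) \<longleftrightarrow> p \<in> V w"
| "sat R S V w Bot \<longleftrightarrow> False"
| "sat R S V w (And \<phi> \<psi>) \<longleftrightarrow> sat R S V w \<phi> \<and> sat R S V w \<psi>"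
| "sat R S V w (Or \<phi> \<psi>) \<longleftrightarrow> sat R S V w \<phi> \<or> sat R S V w \<psi>"
| "sat R S V w (Imp \<phi> \<psi>) \<longleftrightarrow>
     (\<forall>v. (w, v) \<in> R \<longrightarrow> sat R S V v \<phi> \<longrightarrow> sat R S V v \<psi>)"
| "sat R S V w (Next \<phi>) \<longleftrightarrow> sat R S V (S w) \<phi>"
| "sat R S V w (Until \<phi> \<psi>) \<longleftrightarrow>
     (\<exists>k. sat R S V ((S ^^ k) w) \<psi> \<and> (\<forall>i<k. sat R S V ((S ^^ i) w) \<phi>))"
| "sat R S V w (Release \<phi> \<psi>) \<longleftrightarrow>
     (\<forall>k. sat R S V ((S ^^ k) w) \<psi> \<or> (\<exists>i<k. sat R S V ((S ^^ i) w) \<phi>))"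

definition ITL_BD_model :: "nat \<Rightarrow> 'w set \<Rightarrow> 'w rel \<Rightarrow> ('w \<Rightarrow> 'w) \<Rightarrow> ('w \<Rightarrow> 'p set) \<Rightarrow> bool" where
  "ITL_BD_model n W R S V \<longleftrightarrow>
     persistent_frame W R S \<and> depth_le n W R \<and> monotone_val W R V"

definition LTL_model :: "'w set \<Rightarrow> 'w rel \<Rightarrow> ('w \<Rightarrow> 'w) \<Rightarrow> ('w \<Rightarrow> 'p set) \<Rightarrow> bool" where
  "LTL_model W R S V \<longleftrightarrow> ITL_BD_model 1 W R S V"

definition consistent ::
  "('w set \<Rightarrow> 'w rel \<Rightarrow> ('w \<Rightarrow> 'w) \<Rightarrow> ('w \<Rightarrow> 'p set) \<Rightarrow> bool) \<Rightarrow> 'p fm set \<Rightarrow> bool" where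
  "consistent L \<Gamma> \<longleftrightarrow>
     (\<exists>W R S V w. L W R S V \<and> w \<in> W \<and> (\<forall>\<gamma>\<in>\<Gamma>. sat R S V w \<gamma>))"

end

theory Submission
  imports Defs
begin

lemma iter_R:
  assumes fc: "\<forall>w v. (w, v) \<in> R \<longrightarrow> (S w, S v) \<in> R" and "(w, v) \<in> R"
  shows "((S ^^ k) w, (S ^^ k) v) \<in> R"
  using assms(2) by (induction k) (auto simp: fc)

lemma persist:
  assumes fc: "\<forall>w v. (w, v) \<in> R \<longrightarrow> (S w, S v) \<in> R" and tr: "trans R"
    and mv: "\<forall>w v. (w, v) \<in> R \<longrightarrow> V w \<subseteq> V v"
  shows "(w, v) \<in> R \<Longrightarrow> sat R S V w \<phi> \<Longrightarrow> sat R S V v \<phi>"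
proof (induction \<phi> arbitrary: w v)
  case (Atom p) then show ?case using mv by auto
next
  case (Imp \<phi> \<psi>) then show ?case using tr by (auto dest: transD)
next
  case (Next \<phi>) then show ?case using fc by auto
next
  case (Until \<phi> \<psi>)
  then show ?case using iter_R[OF fc] by simp blast
next
  case (Release \<phi> \<psi>)
  then show ?case using iter_R[OF fc] by simp blast
qed auto

lemma restrict_sat:
  assumes cl: "\<forall>m\<in>M. S m \<in> M"
    and mx: "\<forall>m\<in>M. \<forall>v. (m, v) \<in> R \<longleftrightarrow> v = m"
  shows "m \<in> M \<Longrightarrow> sat R S V m \<phi> \<longleftrightarrow> sat (Id_on M) S V m \<phi>"
proof (induction \<phi> arbitrary: m)
  case (Imp \<phi> \<psi>)
  then show ?case using mx by (auto simp: Id_on_def)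
next
  case (Next \<phi>) then show ?case using cl by auto
next
  case (Until \<phi> \<psi>)
  have "\<And>k. (S ^^ k) m \<in> M" using Until.prems cl by (induct_tac k) auto
  then show ?case using Until.IH by simp
next
  case (Release \<phi> \<psi>)
  have "\<And>k. (S ^^ k) m \<in> M" using Release.prems cl by (induct_tac k) auto
  then show ?case using Release.IH by simp
qed auto

lemma exists_max:
  assumes po: "partial_order_on W R" and d: "depth_le n W R" and w: "w \<in> W"
  shows "\<exists>m. (w, m) \<in> R \<and> (\<forall>v. (m, v) \<in> R \<longrightarrow> v = m)"
proof (rule ccontr)
  assume "\<not> ?thesis"
  then have nx: "\<And>x. (w, x) \<in> R \<Longrightarrow> \<exists>y. (x, y) \<in> R \<and> y \<noteq> x" by blast
  have refl: "refl_on W R" and tr: "trans R" and as: "antisym R" and sub: "R \<subseteq> W \<times> W"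
    using partial_order_onD[OF po] by auto
  define f where "f = rec_nat w (\<lambda>_ x. SOME y. (x, y) \<in> R \<and> y \<noteq> x)"
  have f0: "f 0 = w" and fS: "\<And>k. f (Suc k) = (SOME y. (f k, y) \<in> R \<and> y \<noteq> f k)"
    by (simp_all add: f_def)
  have wf: "\<And>k. (w, f k) \<in> R \<and> (f k, f (Suc k)) \<in> R \<and> f (Suc k) \<noteq> f k"
  proof -
    fix k show "(w, f k) \<in> R \<and> (f k, f (Suc k)) \<in> R \<and> f (Suc k) \<noteq> f k"
    proof (induction k)
      case 0
      have "(w, w) \<in> R" using refl w by (simp add: refl_on_def)
      then show ?case using someI_ex[OF nx[of w]] by (simp add: f0 fS)
    next
      case (Suc k)
      then have a: "(w, f (Suc k)) \<in> R" using tr by (meson transD)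
      then show ?case using someI_ex[OF nx[OF a]] by (simp add: fS[of "Suc k"])
    qed
  qed
  have fW: "\<And>k. f k \<in> W" using wf sub by blast
  have le: "\<And>i j. i \<le> j \<Longrightarrow> (f i, f j) \<in> R"
  proof -
    fix i j :: nat assume "i \<le> j"
    then show "(f i, f j) \<in> R"
    proof (induction j)
      case 0 then show ?case using refl fW by (simp add: refl_on_def)
    next
      case (Suc j)
      show ?case
      proof (cases "i = Suc j")
        case True then show ?thesis using refl fW by (simp add: refl_on_def)
      next
        case False
        then have "(f i, f j) \<in> R" using Suc by simp
        then show ?thesis using wf tr by (meson transD)
      qed
    qed
  qed
  have inj: "inj f"
  proof (rule injI)
    have lt: "\<And>i j. i < j \<Longrightarrow> f i \<noteq> f j"
    proof
      fix i j :: nat assume ij: "i < j" "f i = f j"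
      have "(f (Suc i), f j) \<in> R" using le ij by simp
      then have "(f (Suc i), f i) \<in> R" using ij by simp
      moreover have "(f i, f (Suc i)) \<in> R" using wf by blast
      ultimately have "f (Suc i) = f i" using as by (meson antisymD)
      then show False using wf by blast
    qed
    fix x y assume "f x = f y"
    then show "x = y" using lt by (metis linorder_neqE_nat)
  qed
  let ?C = "f ` {0..n}"
  have "?C \<subseteq> W" using fW by auto
  moreover have "card ?C = n + 1" using inj card_image[of f "{0..n}"] by (simp add: inj_on_subset)
  moreover have "\<forall>x\<in>?C. \<forall>y\<in>?C. (x, y) \<in> R \<or> (y, x) \<in> R"
    using le by (auto, meson nat_le_linear)
  ultimately show False using d unfolding depth_le_def by blast
qed

theorem lemma4p6:
  fixes n :: nat and \<Gamma> :: "('p::countable) fm set"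
  assumes "n \<ge> 1"
  shows "consistent (ITL_BD_model n :: 'w set \<Rightarrow> 'w rel \<Rightarrow> ('w \<Rightarrow> 'w) \<Rightarrow> ('w \<Rightarrow> 'p set) \<Rightarrow> bool) \<Gamma>
     \<longleftrightarrow> consistent (LTL_model :: 'w set \<Rightarrow> 'w rel \<Rightarrow> ('w \<Rightarrow> 'w) \<Rightarrow> ('w \<Rightarrow> 'p set) \<Rightarrow> bool) \<Gamma>"
proof
  assume "consistent (ITL_BD_model n :: 'w set \<Rightarrow> 'w rel \<Rightarrow> ('w \<Rightarrow> 'w) \<Rightarrow> ('w \<Rightarrow> 'p set) \<Rightarrow> bool) \<Gamma>"
  then obtain W :: "'w set" and R S and V :: "'w \<Rightarrow> 'p set" and w where m: "ITL_BD_model n W R S V" and w: "w \<in> W"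
    and g: "\<forall>\<gamma>\<in>\<Gamma>. sat R S V w \<gamma>"
    unfolding consistent_def by blast
  have po: "partial_order_on W R" and fc: "\<forall>w v. (w, v) \<in> R \<longrightarrow> (S w, S v) \<in> R"
    and SW: "\<forall>w\<in>W. S w \<in> W" and bc: "backward_confluent W R S"
    and d: "depth_le n W R" and mv: "\<forall>w v. (w, v) \<in> R \<longrightarrow> V w \<subseteq> V v"
    using m unfolding ITL_BD_model_def persistent_frame_def itl_frame_def monotone_val_def by auto
  have refl: "refl_on W R" and tr: "trans R" and sub: "R \<subseteq> W \<times> W"
    using partial_order_onD[OF po] by auto
  obtain mm where wm: "(w, mm) \<in> R" and mmx: "\<forall>v. (mm, v) \<in> R \<longrightarrow> v = mm"
    using exists_max[OF po d w] by blast
  define M where "M = {m \<in> W. \<forall>v. (m, v) \<in> R \<longrightarrow> v = m}"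
  have mmM: "mm \<in> M" using wm sub mmx by (auto simp: M_def)
  have mx: "\<forall>m\<in>M. \<forall>v. (m, v) \<in> R \<longleftrightarrow> v = m"
    using refl by (auto simp: M_def refl_on_def)
  have cl: "\<forall>m\<in>M. S m \<in> M"
  proof
    fix m assume mM: "m \<in> M"
    have "S m \<in> W" using SW mM by (auto simp: M_def)
    moreover have "\<forall>u. (S m, u) \<in> R \<longrightarrow> u = S m"
    proof (intro allI impI)
      fix u assume "(S m, u) \<in> R"
      then obtain t where "(m, t) \<in> R" "S t = u" using bc mM unfolding backward_confluent_def M_def by blast
      then show "u = S m" using mM by (auto simp: M_def)
    qed
    ultimately show "S m \<in> M" by (simp add: M_def)
  qed
  have "LTL_model M (Id_on M) S V"
    unfolding LTL_model_def ITL_BD_model_def persistent_frame_def itl_frame_def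
      backward_confluent_def depth_le_def monotone_val_def
  proof (intro conjI)
    show "M \<noteq> {}" using mmM by auto
    show "partial_order_on M (Id_on M)"
      by (auto simp: partial_order_on_def preorder_on_def refl_on_def trans_def antisym_def Id_on_def)
    show "\<not> (\<exists>C\<subseteq>M. card C = 1 + 1 \<and> (\<forall>x\<in>C. \<forall>y\<in>C. (x, y) \<in> Id_on M \<or> (y, x) \<in> Id_on M))"
    proof
      assume "\<exists>C\<subseteq>M. card C = 1 + 1 \<and> (\<forall>x\<in>C. \<forall>y\<in>C. (x, y) \<in> Id_on M \<or> (y, x) \<in> Id_on M)"
      then obtain C where c2: "card C = 1 + 1" and cr: "\<forall>x\<in>C. \<forall>y\<in>C. (x, y) \<in> Id_on M \<or> (y, x) \<in> Id_on M" by blast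
      from c2 have "card C = 2" by simp
      then obtain x y where "C = {x, y}" "x \<noteq> y" by (meson card_2_iff)
      then show False using cr by (auto simp: Id_on_def)
    qed
  qed (use cl in auto)
  moreover have "\<forall>\<gamma>\<in>\<Gamma>. sat (Id_on M) S V mm \<gamma>"
    using g persist[OF fc tr mv wm] restrict_sat[OF cl mx mmM] by blast
  ultimately show "consistent (LTL_model :: 'w set \<Rightarrow> 'w rel \<Rightarrow> ('w \<Rightarrow> 'w) \<Rightarrow> ('w \<Rightarrow> 'p set) \<Rightarrow> bool) \<Gamma>"
    unfolding consistent_def using mmM by blast
next
  assume "consistent (LTL_model :: 'w set \<Rightarrow> 'w rel \<Rightarrow> ('w \<Rightarrow> 'w) \<Rightarrow> ('w \<Rightarrow> 'p set) \<Rightarrow> bool) \<Gamma>"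
  then obtain W :: "'w set" and R S and V :: "'w \<Rightarrow> 'p set" and w where m: "LTL_model W R S V" and w: "w \<in> W"
    and g: "\<forall>\<gamma>\<in>\<Gamma>. sat R S V w \<gamma>"
    unfolding consistent_def by blast
  have "depth_le n W R"
    unfolding depth_le_def
  proof
    assume "\<exists>C\<subseteq>W. card C = n + 1 \<and> (\<forall>x\<in>C. \<forall>y\<in>C. (x, y) \<in> R \<or> (y, x) \<in> R)"
    then obtain C where C: "C \<subseteq> W" "card C = n + 1" "\<forall>x\<in>C. \<forall>y\<in>C. (x, y) \<in> R \<or> (y, x) \<in> R" by blast
    then have "2 \<le> card C" using assms by simp
    then obtain D where "D \<subseteq> C" "card D = 2" by (meson obtain_subset_with_card_n)
    then have "\<exists>C\<subseteq>W. card C = 1 + 1 \<and> (\<forall>x\<in>C. \<forall>y\<in>C. (x, y) \<in> R \<or> (y, x) \<in> R)"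
      using C by (intro exI[of _ D]) auto
    then show False using m unfolding LTL_model_def ITL_BD_model_def depth_le_def by blast
  qed
  then have "ITL_BD_model n W R S V" using m unfolding LTL_model_def ITL_BD_model_def by blast
  then show "consistent (ITL_BD_model n :: 'w set \<Rightarrow> 'w rel \<Rightarrow> ('w \<Rightarrow> 'w) \<Rightarrow> ('w \<Rightarrow> 'p set) \<Rightarrow> bool) \<Gamma>"
    unfolding consistent_def using w g by blast
qed

end
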